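(* Under the setting and hypotheses of the outer-loop iteration below (with $\epsilon\in(0,1/3)$), fix a target radius $R_k>R_\infty$ and a stopping threshold $$C_{stop}\ge\|\Sigma_g\|_{op}+\delta_\Sigma+(\delta_\mu+R_k)^2+\delta_T .$$ Consider the stopped procedure: at outer iteration $s$, stop and output $\bar w^{[s]}$ if $\gamma(\bar w^{[s]};\hat\mu^{[s]})\le C_{stop}$; otherwise set $\hat\mu^{[s+1]}=\sum_n\bar w^{[s]}_ng_n$ and continue. Then: (1) if $e^{[s]}\le R_k$ then $\gamma(\bar w^{[s]};\hat\mu^{[s]})\le C_{stop}$; consequently the procedure stops at some iteration $s\le s_{\max}:=1+\Big\lceil\frac{\log\big((e^{[1]}-R_\infty)_+/(R_k-R_\infty)\big)}{\log(1/\alpha_\epsilon)}\Big\rceil$ (with $s_{\max}:=1$ if $e^{[1]}\le R_\infty$); (2) if the procedure stops at iteration $s$, then $\big\|\sum_{n=1}^N\bar w^{[s]}_ng_n-\mu_g\big\|_2\le\delta_\mu+\alpha_\epsilon\sqrt{C_{stop}}$.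
   Context: Fix $N\ge1$, $p\ge2$, $\epsilon\in(0,1/3)$ and vectors $g_1,\dots,g_N\in\mathbb R^p$ with $\nu=\max_{i,j}\|g_i-g_j\|_2^2>0$; fix $T\ge4\max\{\log\frac1{1-\epsilon},\log p\}$ and $\delta_T=4\nu(\sqrt{\log(1/(1-\epsilon))/T}+\sqrt{\log p/T})$. For an index set $I$ and $\epsilon'\in[0,1)$, $\Delta_{I,\epsilon'}=\{w\in\mathbb R^I:\sum_{n\in I}w_n=1,0\le w_n\le\frac1{(1-\epsilon')|I|}\}$; $\Delta_{N,\epsilon}=\Delta_{[N],\epsilon}$. Density matrices $\mathfrak D_p=\{\rho\succeq0\text{ symmetric},\mathrm{Tr}\rho=1\}$. For $\hat\mu\in\mathbb R^p$: $S(w;\hat\mu)=\sum_nw_n(g_n-\hat\mu)(g_n-\hat\mu)^\top$, $\gamma(w;\hat\mu)=\|S(w;\hat\mu)\|_{op}$, $\mathrm{OPT}(\hat\mu)=\min_{w\in\Delta_{N,\epsilon}}\max_{\rho\in\mathfrak D_p}\mathrm{Tr}(S(w;\hat\mu)\rho)$. Inlier stability condition: a partition $[N]=I_{in}\sqcup I_{out}$ with $|I_{out}|\le\epsilon N$, $\mu_g\in\mathbb R^p$, symmetric PSD $\Sigma_g$, constants $\delta_\mu,\delta_\Sigma\ge0$ with, for every $w\in\Delta_{I_{in},\epsilon/(1-\epsilon)}$, $\|\sum_{n\in I_{in}}w_n(g_n-\mu_g)\|_2\le\delta_\mu$ and $\sum_{n\in I_{in}}w_n(g_n-\mu_g)(g_n-\mu_g)^\top\preceq\Sigma_g+\delta_\Sigma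 I$. Outer-loop iteration: $\hat\mu^{[1]}\in\operatorname{conv}\{g_n\}$; at iteration $s$ a weight vector $\bar w^{[s]}\in\Delta_{N,\epsilon}$ is produced with $\gamma(\bar w^{[s]};\hat\mu^{[s]})\le\mathrm{OPT}(\hat\mu^{[s]})+\delta_T$ (e.g. by MW–MMW rounds with uniform start and step sizes $\eta_w=\frac1\nu\sqrt{\log(1/(1-\epsilon))/T}$, $\eta_\rho=\frac1\nu\sqrt{\log p/T}$), and if not stopped $\hat\mu^{[s+1]}=\sum_n\bar w^{[s]}_ng_n$. Set $e^{[s]}=\|\hat\mu^{[s]}-\mu_g\|_2$, $\alpha_\epsilon=\sqrt{\epsilon/(1-2\epsilon)}$, $R_{\epsilon,T}=(1+\alpha_\epsilon)\delta_\mu+\alpha_\epsilon\sqrt{\|\Sigma_g\|_{op}+\delta_\Sigma+\delta_T}$, $R_\infty=R_{\epsilon,T}/(1-\alpha_\epsilon)$. *)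

theory Defs
  imports "HOL-Analysis.Analysis"
begin

text \<open>Vectors in R^p are elements of real^'p (p = CARD('p)); p x p matrices are real^'p^'p.
  Indices [N] are represented as {..<N}.  A weight vector w in R^I is a function
  nat => real that vanishes outside I.\<close>

definition capped_simplex :: "nat set \<Rightarrow> real \<Rightarrow> (nat \<Rightarrow> real) set" where
  "capped_simplex I e' = {w. (\<forall>n. n \<notin> I \<longrightarrow> w n = 0) \<and> (\<Sum>n\<in>I. w n) = 1 \<and>
      (\<forall>n\<in>I. 0 \<le> w n \<and> w n \<le> 1 / ((1 - e') * real (card I)))}"

definition outer :: "real^'p \<Rightarrow> real^'p^'p" where
  "outer v = (\<chi> i j. v $ i * v $ j)"

definition psd :: "real^'p^'p \<Rightarrow> bool" where
  "psd A \<longleftrightarrow> transpose A = A \<and> (\<forall>x. 0 \<le> x \<bullet> (A *v x))"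

definition loewner_le :: "real^'p^'p \<Rightarrow> real^'p^'p \<Rightarrow> bool" where
  "loewner_le A B \<longleftrightarrow> psd (B - A)"

definition density_matrices :: "(real^'p^'p) set" where
  "density_matrices = {\<rho>. psd \<rho> \<and> trace \<rho> = 1}"

definition opnorm :: "real^'p^'p \<Rightarrow> real" where
  "opnorm A = onorm (\<lambda>x. A *v x)"

definition Smat :: "nat \<Rightarrow> (nat \<Rightarrow> real^'p) \<Rightarrow> (nat \<Rightarrow> real) \<Rightarrow> real^'p \<Rightarrow> real^'p^'p" where
  "Smat N g w mu = (\<Sum>n<N. w n *\<^sub>R outer (g n - mu))"

definition gam :: "nat \<Rightarrow> (nat \<Rightarrow> real^'p) \<Rightarrow> (nat \<Rightarrow> real) \<Rightarrow> real^'p \<Rightarrow> real" where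
  "gam N g w mu = opnorm (Smat N g w mu)"

definition OPT :: "nat \<Rightarrow> real \<Rightarrow> (nat \<Rightarrow> real^'p) \<Rightarrow> real^'p \<Rightarrow> real" where
  "OPT N eps g mu = (INF w\<in>capped_simplex {..<N} eps.
       SUP \<rho>\<in>(density_matrices :: (real^'p^'p) set). trace (Smat N g w mu ** \<rho>))"

definition inlier_stable ::
  "nat \<Rightarrow> real \<Rightarrow> (nat \<Rightarrow> real^'p) \<Rightarrow> nat set \<Rightarrow> nat set \<Rightarrow> real^'p \<Rightarrow> real^'p^'p \<Rightarrow> real \<Rightarrow> real \<Rightarrow> bool" where
  "inlier_stable N eps g Iin Iout mug Sig dmu dSig \<longleftrightarrow>
     Iin \<union> Iout = {..<N} \<and> Iin \<inter> Iout = {} \<and> real (card Iout) \<le> eps * real N \<and>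
     psd Sig \<and> dmu \<ge> 0 \<and> dSig \<ge> 0 \<and>
     (\<forall>w\<in>capped_simplex Iin (eps / (1 - eps)).
        norm (\<Sum>n\<in>Iin. w n *\<^sub>R (g n - mug)) \<le> dmu \<and>
        loewner_le (\<Sum>n\<in>Iin. w n *\<^sub>R outer (g n - mug)) (Sig + dSig *\<^sub>R mat 1))"

definition alpha_eps :: "real \<Rightarrow> real" where
  "alpha_eps eps = sqrt (eps / (1 - 2 * eps))"

definition deltaT :: "real \<Rightarrow> real \<Rightarrow> nat \<Rightarrow> nat \<Rightarrow> real" where
  "deltaT nu eps p T = 4 * nu * (sqrt (ln (1 / (1 - eps)) / real T) + sqrt (ln (real p) / real T))"

definition R_epsT :: "real \<Rightarrow> real \<Rightarrow> real \<Rightarrow> real \<Rightarrow> real \<Rightarrow> real" where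
  "R_epsT eps dmu nSig dSig dT =
     (1 + alpha_eps eps) * dmu + alpha_eps eps * sqrt (nSig + dSig + dT)"

definition R_inf :: "real \<Rightarrow> real \<Rightarrow> real \<Rightarrow> real \<Rightarrow> real \<Rightarrow> real" where
  "R_inf eps dmu nSig dSig dT = R_epsT eps dmu nSig dSig dT / (1 - alpha_eps eps)"

text \<open>s_max; the ceiling is clamped at 0 so that s_max \<ge> 1.\<close>
definition s_max :: "real \<Rightarrow> real \<Rightarrow> real \<Rightarrow> real \<Rightarrow> int" where
  "s_max e1 Rinf Rk a =
     (if e1 \<le> Rinf then 1
      else 1 + max 0 \<lceil>ln ((e1 - Rinf) / (Rk - Rinf)) / ln (1 / a)\<rceil>)"

end

theory Submission
  imports Defs
begin


lemma inner_mv: "(x::real^'n) \<bullet> (A *v y) = (\<Sum>j\<in>UNIV. \<Sum>k\<in>UNIV. x$j * A$j$k * y$k)"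
  by (simp add: inner_vec_def matrix_vector_mult_def sum_distrib_left mult.assoc)

lemma trace_mm: "trace ((A::real^'n^'n) ** B) = (\<Sum>i\<in>UNIV. \<Sum>k\<in>UNIV. A$i$k * B$k$i)"
  by (simp add: trace_def matrix_matrix_mult_def)

lemma outer_mv: "outer v *v x = (v \<bullet> x) *\<^sub>R (v::real^'n)"
  by (simp add: outer_def matrix_vector_mult_def inner_vec_def vec_eq_iff sum_distrib_left mult.assoc mult.commute mult.left_commute)

lemma outer_quad: "(x::real^'n) \<bullet> (outer v *v x) = (v \<bullet> x)\<^sup>2"
  by (simp add: outer_mv power2_eq_square inner_commute)

lemma outer_transpose: "transpose (outer (v::real^'n)) = outer v"
  by (simp add: outer_def transpose_def vec_eq_iff mult.commute)

lemma trace_outer: "trace (outer (v::real^'n) ** B) = v \<bullet> (B *v v)"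
  unfolding trace_mm inner_mv outer_def
  apply (simp add: sum_distrib_left)
  apply (subst sum.swap)
  apply (simp add: mult_ac)
  done

lemma trace_outer1: "trace (outer (v::real^'n)) = (norm v)\<^sup>2"
  by (simp add: trace_def outer_def power2_norm_eq_inner inner_vec_def)



lemma sym_bilin: assumes "transpose A = A"
  shows "(x::real^'n) \<bullet> (A *v y) = y \<bullet> (A *v x)"
proof -
  have s: "\<And>j k. A$j$k = A$k$j" using assms by (metis transpose_def vec_lambda_beta)
  show ?thesis unfolding inner_mv
    apply (subst sum.swap)
    apply (simp add: s mult_ac)
    done
qed

lemma quad_expand: assumes "transpose A = A"
  shows "(x + t *\<^sub>R y) \<bullet> (A *v (x + t *\<^sub>R y)) =
     x \<bullet> (A *v x) + 2 * t * (y \<bullet> (A *v x)) + t\<^sup>2 * (y \<bullet> (A *v (y::real^'n)))"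
  using sym_bilin[OF assms, of x y]
  by (simp add: matrix_vector_right_distrib matrix_vector_mult_scaleR inner_add_left inner_add_right
      algebra_simps power2_eq_square)

lemma psd_cs: assumes "psd A"
  shows "((A *v x) $ i)\<^sup>2 \<le> A$i$i * ((x::real^'n) \<bullet> (A *v x))"
proof -
  define e :: "real^'n" where "e = axis i 1"
  have sym: "transpose A = A" and q: "\<And>z. 0 \<le> z \<bullet> (A *v z)" using assms by (auto simp: psd_def)
  have eb: "e \<bullet> (A *v x) = (A *v x) $ i" by (simp add: e_def inner_axis')
  have ea: "e \<bullet> (A *v e) = A$i$i" by (simp add: e_def inner_axis' matrix_vector_mult_basis column_def)
  define a where "a = A$i$i"
  define b where "b = (A *v x) $ i"
  define c where "c = x \<bullet> (A *v x)"
  have key: "\<And>t. 0 \<le> c + 2*t*b + t\<^sup>2 * a"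
    using q quad_expand[OF sym] eb ea unfolding a_def b_def c_def by metis
  have a0: "0 \<le> a" using q[of e] ea a_def by simp
  show ?thesis
  proof (cases "a = 0")
    case True
    have "b = 0"
    proof (rule ccontr)
      assume "b \<noteq> 0"
      have "0 \<le> c + 2*(-(c+1)/(2*b))*b + (-(c+1)/(2*b))\<^sup>2 * a" by (rule key)
      also have "\<dots> = -1" using \<open>b \<noteq> 0\<close> True by (simp add: field_simps)
      finally show False by simp
    qed
    then show ?thesis using True a_def b_def by simp
  next
    case False
    then have ap: "a > 0" using a0 by simp
    have "0 \<le> c + 2*(-b/a)*b + (-b/a)\<^sup>2 * a" by (rule key)
    also have "\<dots> = (a*c - b\<^sup>2)/a" using ap by (simp add: field_simps power2_eq_square)
    finally have "0 \<le> a*c - b\<^sup>2" using ap by (simp add: divide_nonneg_pos zero_le_divide_iff)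
    then show ?thesis unfolding a_def b_def c_def by simp
  qed
qed

lemma psd_row_zero: assumes "psd A" "A$i$i = 0" shows "A$i = 0"
proof -
  have "\<And>x. (A *v x) $ i = 0"
  proof -
    fix x
    have "((A *v x) $ i)\<^sup>2 \<le> 0" using psd_cs[OF assms(1), of x i] assms(2) by simp
    then show "(A *v x) $ i = 0" by simp
  qed
  then have "\<And>j. A$i$j = 0"
    by (metis matrix_vector_mult_basis column_def vec_lambda_beta)
  then show ?thesis by (simp add: vec_eq_iff)
qed

lemma trace_add_mm: "trace (((B::real^'n^'n) + C) ** R) = trace (B ** R) + trace (C ** R)"
  by (simp add: trace_mm distrib_right sum.distrib)

lemma trace_diff_mm: "trace (((B::real^'n^'n) - C) ** R) = trace (B ** R) - trace (C ** R)"
  by (simp add: trace_mm left_diff_distrib sum_subtractf)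

lemma trace_scale_mm: "trace ((c *\<^sub>R (B::real^'n^'n)) ** R) = c * trace (B ** R)"
  by (simp add: trace_mm sum_distrib_left mult.assoc)

lemma psd_trace_nonneg_aux:
  fixes \<rho> :: "real^'n^'n"
  assumes "psd \<rho>"
  shows "\<forall>A::real^'n^'n. card {i. A$i \<noteq> 0} \<le> k \<longrightarrow> psd A \<longrightarrow> 0 \<le> trace (A ** \<rho>)"
proof (induction k)
  case 0
  then show ?case by (auto simp: vec_eq_iff trace_mm)
next
  case (Suc k)
  show ?case
  proof (intro allI impI)
    fix A :: "real^'n^'n"
    assume ck: "card {i. A$i \<noteq> 0} \<le> Suc k" and pA: "psd A"
    show "0 \<le> trace (A ** \<rho>)"
    proof (cases "A = 0")
      case True then show ?thesis by (simp add: trace_def)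
    next
      case False
      then obtain i where i: "A$i \<noteq> 0" by (metis vec_eq_iff zero_index)
      have sym: "transpose A = A" and q: "\<And>z. 0 \<le> z \<bullet> (A *v z)" using pA by (auto simp: psd_def)
      have s: "\<And>j k. A$j$k = A$k$j" using sym by (metis transpose_def vec_lambda_beta)
      have aii: "A$i$i > 0"
      proof -
        have "A$i$i \<ge> 0" using q[of "axis i 1"] by (simp add: inner_axis' matrix_vector_mult_basis column_def)
        moreover have "A$i$i \<noteq> 0" using psd_row_zero[OF pA] i by blast
        ultimately show ?thesis by simp
      qed
      define v :: "real^'n" where "v = (\<chi> j. A$j$i / sqrt (A$i$i))"
      define B where "B = A - outer v"
      have ov: "\<And>j l. outer v $ j $ l = A$j$i * A$l$i / A$i$i"
        using aii by (simp add: v_def outer_def real_sqrt_mult[symmetric] power2_eq_square[symmetric]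
           field_simps)
      have Bi: "B$i = 0"
      proof -
        have "\<And>l. B$i$l = 0"
        proof -
          fix l
          have "B$i$l = A$i$l - A$i$i * A$l$i / A$i$i" by (simp add: B_def ov)
          also have "\<dots> = A$i$l - A$l$i" using aii by simp
          also have "\<dots> = 0" using s[of i l] by simp
          finally show "B$i$l = 0" .
        qed
        then show ?thesis by (simp add: vec_eq_iff)
      qed
      have Bsub: "{j. B$j \<noteq> 0} \<subseteq> {j. A$j \<noteq> 0} - {i}"
      proof
        fix j assume "j \<in> {j. B$j \<noteq> 0}"
        then have "B$j \<noteq> 0" by simp
        moreover have "A$j = 0 \<Longrightarrow> B$j = 0"
        proof -
          assume "A$j = 0"
          then have "A$j$i = 0" by simp
          then show "B$j = 0" using \<open>A$j = 0\<close> by (simp add: B_def vec_eq_iff ov)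
        qed
        ultimately show "j \<in> {j. A$j \<noteq> 0} - {i}" using Bi by auto
      qed
      have "card {j. B$j \<noteq> 0} < card {j. A$j \<noteq> 0}"
        by (rule psubset_card_mono) (use Bsub i in auto)
      then have cB: "card {j. B$j \<noteq> 0} \<le> k" using ck by simp
      have vx: "\<And>x. (v \<bullet> x)\<^sup>2 = ((A *v x) $ i)\<^sup>2 / A$i$i"
      proof -
        fix x :: "real^'n"
        have "v \<bullet> x = (\<Sum>j\<in>UNIV. A$j$i / sqrt (A$i$i) * x$j)"
          by (simp add: v_def inner_vec_def)
        also have "\<dots> = (\<Sum>j\<in>UNIV. A$i$j * x$j) / sqrt (A$i$i)"
          by (simp add: sum_divide_distrib) (metis s)
        also have "\<dots> = (A *v x) $ i / sqrt (A$i$i)"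
          by (simp add: matrix_vector_mult_def)
        finally have "v \<bullet> x = (A *v x) $ i / sqrt (A$i$i)" .
        then show "(v \<bullet> x)\<^sup>2 = ((A *v x) $ i)\<^sup>2 / A$i$i"
          using aii by (simp add: power_divide)
      qed
      have pB: "psd B"
        unfolding psd_def
      proof (intro conjI allI)
        show "transpose B = B" using sym outer_transpose[of v]
          by (simp add: B_def vec_eq_iff transpose_def)
      next
        fix x :: "real^'n"
        have "x \<bullet> (B *v x) = x \<bullet> (A *v x) - (v \<bullet> x)\<^sup>2"
          by (simp add: B_def matrix_vector_mult_diff_rdistrib inner_diff_right outer_quad)
        also have "\<dots> = x \<bullet> (A *v x) - ((A *v x) $ i)\<^sup>2 / A$i$i" by (simp add: vx)
        also have "\<dots> \<ge> 0" using psd_cs[OF pA, of x i] aii by (simp add: divide_le_eq mult.commute)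
        finally show "0 \<le> x \<bullet> (B *v x)" .
      qed
      have "0 \<le> trace (B ** \<rho>)" using Suc.IH cB pB by blast
      moreover have "0 \<le> trace (outer v ** \<rho>)" using assms by (simp add: trace_outer psd_def)
      moreover have "A = B + outer v" by (simp add: B_def)
      ultimately show ?thesis by (simp add: trace_add_mm)
    qed
  qed
qed

lemma psd_trace_nonneg: "psd (A::real^'n^'n) \<Longrightarrow> psd \<rho> \<Longrightarrow> 0 \<le> trace (A ** \<rho>)"
  using psd_trace_nonneg_aux by blast



lemma trace_le_of_quad:
  assumes sym: "transpose (S::real^'n^'n) = S" and qb: "\<And>x. x \<bullet> (S *v x) \<le> c * (norm x)\<^sup>2"
    and rho: "\<rho> \<in> density_matrices"
  shows "trace (S ** \<rho>) \<le> c"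
proof -
  define A where "A = c *\<^sub>R mat 1 - S"
  have pA: "psd A" unfolding psd_def
  proof (intro conjI allI)
    show "transpose A = A" using sym
      by (simp add: A_def vec_eq_iff transpose_def mat_def)
  next
    fix x :: "real^'n"
    have "x \<bullet> (A *v x) = c * (norm x)\<^sup>2 - x \<bullet> (S *v x)"
      by (simp add: A_def matrix_vector_mult_diff_rdistrib inner_diff_right
          scaleR_matrix_vector_assoc[symmetric] power2_norm_eq_inner)
    then show "0 \<le> x \<bullet> (A *v x)" using qb[of x] by simp
  qed
  have pr: "psd \<rho>" "trace \<rho> = 1" using rho by (auto simp: density_matrices_def)
  have "0 \<le> trace (A ** \<rho>)" by (rule psd_trace_nonneg[OF pA pr(1)])
  also have "trace (A ** \<rho>) = c - trace (S ** \<rho>)"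
    using pr(2) by (simp add: A_def trace_diff_mm trace_scale_mm)
  finally show ?thesis by simp
qed

lemma quad_sum: "finite F \<Longrightarrow> (x::real^'n) \<bullet> ((\<Sum>n\<in>F. f n) *v x) = (\<Sum>n\<in>F. x \<bullet> (f n *v x))"
proof (induction F rule: finite_induct)
  case empty
  then show ?case by (simp add: inner_mv)
next
  case (insert a F)
  then show ?case by (simp add: matrix_vector_mult_add_rdistrib inner_add_right)
qed

lemma trace_sum_mm: "finite F \<Longrightarrow> trace ((\<Sum>n\<in>F. (f n::real^'n^'n)) ** R) = (\<Sum>n\<in>F. trace (f n ** R))"
proof (induction F rule: finite_induct)
  case empty
  then show ?case by (simp add: trace_def)
next
  case (insert a F)
  then show ?case by (simp add: trace_add_mm)
qed

lemma transpose_sum: "finite F \<Longrightarrow> transpose (\<Sum>n\<in>F. (f n::real^'n^'n)) = (\<Sum>n\<in>F. transpose (f n))"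
  by (induction F rule: finite_induct) (auto simp: transpose_def vec_eq_iff)

lemma Smat_quad: "x \<bullet> (Smat N g w mu *v x) = (\<Sum>n<N. w n * ((g n - mu) \<bullet> x)\<^sup>2)"
  unfolding Smat_def
  by (simp add: quad_sum scaleR_matrix_vector_assoc[symmetric] outer_quad)

lemma Smat_sym: "transpose (Smat N g w mu) = Smat N g w mu"
  unfolding Smat_def
  by (simp add: transpose_sum) (simp add: transpose_def vec_eq_iff outer_transpose[unfolded transpose_def vec_eq_iff, simplified])

lemma Smat_trace: "trace (Smat N g w mu ** R) = (\<Sum>n<N. w n * ((g n - mu) \<bullet> (R *v (g n - mu))))"
  unfolding Smat_def
  by (simp add: trace_sum_mm trace_scale_mm trace_outer)

lemma quad_le_opnorm: "x \<bullet> (S *v x) \<le> opnorm S * (norm x)\<^sup>2"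
proof -
  have "x \<bullet> (S *v x) \<le> norm x * norm (S *v x)" by (rule norm_cauchy_schwarz)
  also have "\<dots> \<le> norm x * (opnorm S * norm x)"
    unfolding opnorm_def by (rule mult_left_mono[OF onorm]) auto
  finally show ?thesis by (simp add: power2_eq_square mult_ac)
qed

lemma opnorm_nonneg: "0 \<le> opnorm S"
  unfolding opnorm_def by (rule onorm_pos_le) simp



lemma dens_nonempty: "outer (axis k (1::real)) \<in> (density_matrices :: (real^'n^'n) set)"
  unfolding density_matrices_def psd_def
  by (simp add: outer_transpose outer_quad trace_outer1)

lemma Smat_trace_nonneg:
  assumes "\<And>n. n < N \<Longrightarrow> 0 \<le> w n" "\<rho> \<in> density_matrices"
  shows "0 \<le> trace (Smat N g w mu ** \<rho>)"
  unfolding Smat_trace using assms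
  by (intro sum_nonneg mult_nonneg_nonneg) (auto simp: density_matrices_def psd_def)

lemma Smat_bdd:
  assumes w: "\<And>n. n < N \<Longrightarrow> 0 \<le> w n"
  shows "bdd_above ((\<lambda>\<rho>. trace (Smat N g w mu ** \<rho>)) ` density_matrices)"
proof -
  define c where "c = (\<Sum>n<N. w n * (norm (g n - mu))\<^sup>2)"
  have "\<And>x. x \<bullet> (Smat N g w mu *v x) \<le> c * (norm x)\<^sup>2"
  proof -
    fix x
    have "x \<bullet> (Smat N g w mu *v x) = (\<Sum>n<N. w n * ((g n - mu) \<bullet> x)\<^sup>2)" by (rule Smat_quad)
    also have "\<dots> \<le> (\<Sum>n<N. w n * ((norm (g n - mu))\<^sup>2 * (norm x)\<^sup>2))"
    proof (rule sum_mono)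
      fix n assume "n \<in> {..<N}"
      have "((g n - mu) \<bullet> x)\<^sup>2 \<le> (norm (g n - mu) * norm x)\<^sup>2"
        by (metis Cauchy_Schwarz_ineq2 abs_ge_zero power2_abs power_mono)
      then show "w n * ((g n - mu) \<bullet> x)\<^sup>2 \<le> w n * ((norm (g n - mu))\<^sup>2 * (norm x)\<^sup>2)"
        using w[of n] \<open>n \<in> {..<N}\<close> by (intro mult_left_mono) (auto simp: power_mult_distrib)
    qed
    also have "\<dots> = c * (norm x)\<^sup>2" by (simp add: c_def sum_distrib_right mult.assoc)
    finally show "x \<bullet> (Smat N g w mu *v x) \<le> c * (norm x)\<^sup>2" .
  qed
  then have "\<And>\<rho>. \<rho> \<in> density_matrices \<Longrightarrow> trace (Smat N g w mu ** \<rho>) \<le> c"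
    by (intro trace_le_of_quad Smat_sym) auto
  then show ?thesis by (meson bdd_aboveI2)
qed

lemma OPT_bound:
  assumes stab: "inlier_stable N eps g Iin Iout mug Sig dmu dSig"
    and eps: "0 < eps" "eps < 1/3" and N: "N \<ge> 1"
  shows "OPT N eps g mu \<le> opnorm Sig + dSig + (dmu + norm (mu - mug))\<^sup>2"
proof -
  have U: "Iin \<union> Iout = {..<N}" and D: "Iin \<inter> Iout = {}" and cO: "real (card Iout) \<le> eps * real N"
    and dmu: "dmu \<ge> 0" and dSig: "dSig \<ge> 0"
    and inl: "\<And>w. w \<in> capped_simplex Iin (eps / (1 - eps)) \<Longrightarrow>
        norm (\<Sum>n\<in>Iin. w n *\<^sub>R (g n - mug)) \<le> dmu \<and>
        loewner_le (\<Sum>n\<in>Iin. w n *\<^sub>R outer (g n - mug)) (Sig + dSig *\<^sub>R mat 1)"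
    using stab unfolding inlier_stable_def by auto
  have fin: "finite Iin" "finite Iout" using U by (metis finite_Un finite_lessThan)+
  have sub: "Iin \<subseteq> {..<N}" using U by blast
  have cN: "card Iin + card Iout = N" using card_Un_disjoint[OF fin D] U by simp
  have cI: "real (card Iin) \<ge> (1 - eps) * real N" using cN cO by (simp add: algebra_simps)
  have cIpos: "real (card Iin) > 0"
  proof -
    have "(1 - eps) * real N > 0" using eps N by simp
    then show ?thesis using cI by linarith
  qed
  define ws where "ws = (\<lambda>n. if n \<in> Iin then 1 / real (card Iin) else 0)"
  have wsum: "(\<Sum>n\<in>Iin. ws n) = 1" using cIpos by (simp add: ws_def)
  have wsum': "(\<Sum>n<N. ws n) = 1"
    using wsum sum.mono_neutral_right[OF finite_lessThan sub, of ws] by (auto simp: ws_def)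
  have ws_nn: "\<And>n. 0 \<le> ws n" by (simp add: ws_def)
  have wsD: "ws \<in> capped_simplex {..<N} eps"
    unfolding capped_simplex_def
  proof (intro CollectI conjI ballI allI impI)
    fix n assume "n \<notin> {..<N}" then show "ws n = 0" using sub by (auto simp: ws_def)
  next
    show "sum ws {..<N} = 1" by (rule wsum')
  next
    fix n show "0 \<le> ws n" by (rule ws_nn)
  next
    fix n assume "n \<in> {..<N}"
    have "(1 - eps) * real (card {..<N}) > 0" using eps N by simp
    then show "ws n \<le> 1 / ((1 - eps) * real (card {..<N}))"
      using cI cIpos by (auto simp: ws_def intro!: divide_left_mono)
  qed
  have wsI: "ws \<in> capped_simplex Iin (eps / (1 - eps))"
    unfolding capped_simplex_def
  proof (intro CollectI conjI ballI allI impI)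
    fix n assume "n \<notin> Iin" then show "ws n = 0" by (auto simp: ws_def)
  next
    show "sum ws Iin = 1" by (rule wsum)
  next
    fix n show "0 \<le> ws n" by (rule ws_nn)
  next
    fix n assume "n \<in> Iin"
    have e1: "0 < 1 - eps / (1 - eps)" "1 - eps / (1 - eps) \<le> 1" using eps by (auto simp: field_simps)
    then show "ws n \<le> 1 / ((1 - eps / (1 - eps)) * real (card Iin))"
      using cIpos \<open>n \<in> Iin\<close> by (auto simp: ws_def intro!: divide_left_mono mult_pos_pos)
  qed
  obtain m1: "norm (\<Sum>n\<in>Iin. ws n *\<^sub>R (g n - mug)) \<le> dmu"
    and lw: "loewner_le (\<Sum>n\<in>Iin. ws n *\<^sub>R outer (g n - mug)) (Sig + dSig *\<^sub>R mat 1)"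
    using inl[OF wsI] by blast
  define e where "e = norm (mu - mug)"
  define c where "c = opnorm Sig + dSig + (dmu + e)\<^sup>2"
  have qb: "\<And>x. x \<bullet> (Smat N g ws mu *v x) \<le> c * (norm x)\<^sup>2"
  proof -
    fix x :: "real^'a"
    define a where "a = (\<lambda>n. (g n - mug) \<bullet> x)"
    define d where "d = (mug - mu) \<bullet> x"
    define A where "A = (\<Sum>n\<in>Iin. ws n * a n)"
    define Q where "Q = (\<Sum>n\<in>Iin. ws n * (a n)\<^sup>2)"
    have "x \<bullet> (Smat N g ws mu *v x) = (\<Sum>n<N. ws n * ((g n - mu) \<bullet> x)\<^sup>2)" by (rule Smat_quad)
    also have "\<dots> = (\<Sum>n\<in>Iin. ws n * ((g n - mu) \<bullet> x)\<^sup>2)"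
      by (rule sum.mono_neutral_right[OF finite_lessThan sub]) (auto simp: ws_def)
    also have "\<dots> = (\<Sum>n\<in>Iin. ws n * (a n)\<^sup>2 + 2 * d * (ws n * a n) + d\<^sup>2 * ws n)"
    proof (rule sum.cong[OF refl])
      fix n
      have "(g n - mu) \<bullet> x = a n + d" unfolding a_def d_def by (simp add: inner_diff_left)
      then show "ws n * ((g n - mu) \<bullet> x)\<^sup>2 = ws n * (a n)\<^sup>2 + 2 * d * (ws n * a n) + d\<^sup>2 * ws n"
        by (simp add: power2_eq_square algebra_simps)
    qed
    also have "\<dots> = Q + 2 * d * A + d\<^sup>2"
      by (simp add: sum.distrib Q_def A_def sum_distrib_left[symmetric] wsum)
    finally have eq: "x \<bullet> (Smat N g ws mu *v x) = Q + 2 * d * A + d\<^sup>2" .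
    have Qb: "Q \<le> (opnorm Sig + dSig) * (norm x)\<^sup>2"
    proof -
      define C where "C = (\<Sum>n\<in>Iin. ws n *\<^sub>R outer (g n - mug))"
      have "Q = x \<bullet> (C *v x)"
        unfolding C_def Q_def a_def using fin(1)
        by (simp add: quad_sum scaleR_matrix_vector_assoc[symmetric] outer_quad)
      moreover have "0 \<le> x \<bullet> ((Sig + dSig *\<^sub>R mat 1 - C) *v x)"
        using lw unfolding loewner_le_def psd_def C_def by blast
      moreover have "x \<bullet> ((Sig + dSig *\<^sub>R mat 1 - C) *v x) = x \<bullet> (Sig *v x) + dSig * (norm x)\<^sup>2 - x \<bullet> (C *v x)"
        by (simp add: matrix_vector_mult_diff_rdistrib matrix_vector_mult_add_rdistrib inner_diff_right
            inner_add_right scaleR_matrix_vector_assoc[symmetric] power2_norm_eq_inner)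
      moreover have "x \<bullet> (Sig *v x) \<le> opnorm Sig * (norm x)\<^sup>2" by (rule quad_le_opnorm)
      ultimately show ?thesis by (simp add: algebra_simps)
    qed
    have Ab: "\<bar>A\<bar> \<le> dmu * norm x"
    proof -
      have "A = (\<Sum>n\<in>Iin. ws n *\<^sub>R (g n - mug)) \<bullet> x"
        by (simp add: A_def a_def inner_sum_left)
      then have "\<bar>A\<bar> \<le> norm (\<Sum>n\<in>Iin. ws n *\<^sub>R (g n - mug)) * norm x"
        by (simp add: Cauchy_Schwarz_ineq2)
      also have "\<dots> \<le> dmu * norm x" by (rule mult_right_mono[OF m1 norm_ge_zero])
      finally show ?thesis .
    qed
    have db: "\<bar>d\<bar> \<le> e * norm x"
      unfolding d_def e_def using Cauchy_Schwarz_ineq2[of "mug - mu" x] by (simp add: norm_minus_commute)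
    have "2 * d * A \<le> 2 * (e * norm x) * (dmu * norm x)"
    proof -
      have "2 * d * A \<le> 2 * (\<bar>d\<bar> * \<bar>A\<bar>)" by (simp add: abs_mult[symmetric])
      also have "\<dots> \<le> 2 * ((e * norm x) * (dmu * norm x))"
        using db Ab by (intro mult_left_mono mult_mono) auto
      finally show ?thesis by simp
    qed
    moreover have "d\<^sup>2 \<le> (e * norm x)\<^sup>2"
      using db by (metis abs_ge_zero power2_abs power_mono)
    moreover have "0 \<le> dmu\<^sup>2 * (norm x)\<^sup>2" by simp
    ultimately have "Q + 2 * d * A + d\<^sup>2 \<le> c * (norm x)\<^sup>2"
      using Qb unfolding c_def by (simp add: power2_eq_square algebra_simps)
    then show "x \<bullet> (Smat N g ws mu *v x) \<le> c * (norm x)\<^sup>2" using eq by simp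
  qed
  have Fws: "(SUP \<rho>\<in>(density_matrices :: (real^'a^'a) set). trace (Smat N g ws mu ** \<rho>)) \<le> c"
    by (rule cSUP_least) (use dens_nonempty in blast, intro trace_le_of_quad Smat_sym qb)
  have nonneg: "\<And>w. w \<in> capped_simplex {..<N} eps \<Longrightarrow>
      0 \<le> (SUP \<rho>\<in>(density_matrices :: (real^'a^'a) set). trace (Smat N g w mu ** \<rho>))"
  proof -
    fix w assume "w \<in> capped_simplex {..<N} eps"
    then have wn: "\<And>n. n < N \<Longrightarrow> 0 \<le> w n" by (auto simp: capped_simplex_def)
    have "0 \<le> trace (Smat N g w mu ** outer (axis undefined 1))"
      by (rule Smat_trace_nonneg[OF wn dens_nonempty])
    also have "\<dots> \<le> (SUP \<rho>\<in>(density_matrices :: (real^'a^'a) set). trace (Smat N g w mu ** \<rho>))"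
      by (rule cSUP_upper[OF dens_nonempty Smat_bdd[OF wn]])
    finally show "0 \<le> (SUP \<rho>\<in>(density_matrices :: (real^'a^'a) set). trace (Smat N g w mu ** \<rho>))" .
  qed
  have "OPT N eps g mu \<le> (SUP \<rho>\<in>(density_matrices :: (real^'a^'a) set). trace (Smat N g ws mu ** \<rho>))"
    unfolding OPT_def
    by (rule cINF_lower[OF _ wsD]) (use nonneg in \<open>meson bdd_belowI2\<close>)
  also have "\<dots> \<le> c" by (rule Fws)
  finally show ?thesis by (simp add: c_def e_def)
qed



lemma wcs:
  assumes "\<And>i. i \<in> F \<Longrightarrow> 0 \<le> (w::'a \<Rightarrow> real) i"
  shows "(\<Sum>i\<in>F. w i * z i)\<^sup>2 \<le> (\<Sum>i\<in>F. w i) * (\<Sum>i\<in>F. w i * (z i)\<^sup>2)"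
proof -
  have "(\<Sum>i\<in>F. sqrt (w i) * (sqrt (w i) * z i))\<^sup>2 \<le>
        (\<Sum>i\<in>F. (sqrt (w i))\<^sup>2) * (\<Sum>i\<in>F. (sqrt (w i) * z i)\<^sup>2)"
    by (rule Cauchy_Schwarz_ineq_sum)
  moreover have "(\<Sum>i\<in>F. sqrt (w i) * (sqrt (w i) * z i)) = (\<Sum>i\<in>F. w i * z i)"
    using assms by (intro sum.cong) (auto simp: mult.assoc[symmetric])
  moreover have "(\<Sum>i\<in>F. (sqrt (w i))\<^sup>2) = (\<Sum>i\<in>F. w i)"
    using assms by (intro sum.cong) auto
  moreover have "(\<Sum>i\<in>F. (sqrt (w i) * z i)\<^sup>2) = (\<Sum>i\<in>F. w i * (z i)\<^sup>2)"
    using assms by (intro sum.cong) (auto simp: power_mult_distrib)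
  ultimately show ?thesis by simp
qed

lemma cap_arith:
  fixes eps I K :: real
  assumes "0 < eps" "eps < 1/3" "K \<le> eps * (I + K)" "0 \<le> K" "0 < I"
  shows "(1 - eps / (1 - eps)) * I + K \<le> (1 - eps) * (I + K)"
proof -
  have e1: "1 - eps > 0" using assms by simp
  have r: "(1 - eps / (1 - eps)) = (1 - 2*eps) / (1 - eps)" using e1 by (simp add: field_simps)
  have h1: "(1-eps)*K \<le> eps*I" using assms(3) by (simp add: algebra_simps)
  have "((1 - 2*eps) / (1 - eps) * I + K) * (1 - eps) = (1-2*eps)*I + (1-eps)*K"
    using e1 by (simp add: field_simps)
  also have "\<dots> \<le> (1-eps) * (I + K) * (1 - eps)"
  proof -
    have "(1-eps) * (I + K) * (1 - eps) - ((1-2*eps)*I + (1-eps)*K) = eps * (eps*I - (1-eps)*K)"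
      by (simp add: algebra_simps power2_eq_square)
    also have "\<dots> \<ge> 0" using h1 assms(1) by simp
    finally show ?thesis by simp
  qed
  finally show ?thesis unfolding r using e1 by (simp add: mult_ac)
qed

lemma alpha_nonneg: "0 < eps \<Longrightarrow> eps < 1/3 \<Longrightarrow> 0 < alpha_eps eps"
  unfolding alpha_eps_def by simp

lemma mean_bound:
  assumes stab: "inlier_stable N eps g Iin Iout mug Sig dmu dSig"
    and eps: "0 < eps" "eps < 1/3" and N: "N \<ge> 1"
    and wD: "w \<in> capped_simplex {..<N} eps"
  shows "norm ((\<Sum>n<N. w n *\<^sub>R g n) - mug) \<le> dmu + alpha_eps eps * sqrt (gam N g w mu)"
proof -
  have U: "Iin \<union> Iout = {..<N}" and D: "Iin \<inter> Iout = {}" and cO: "real (card Iout) \<le> eps * real N"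
    and dmu: "dmu \<ge> 0"
    and inl: "\<And>w. w \<in> capped_simplex Iin (eps / (1 - eps)) \<Longrightarrow>
        norm (\<Sum>n\<in>Iin. w n *\<^sub>R (g n - mug)) \<le> dmu"
    using stab unfolding inlier_stable_def by auto
  have fin: "finite Iin" "finite Iout" using U by (metis finite_Un finite_lessThan)+
  have sub: "Iin \<subseteq> {..<N}" "Iout \<subseteq> {..<N}" using U by blast+
  have cN: "card Iin + card Iout = N" using card_Un_disjoint[OF fin D] U by simp
  have split: "\<And>f. (\<Sum>n<N. f n) = (\<Sum>n\<in>Iin. f n) + (\<Sum>n\<in>Iout. f n)"
    using sum.union_disjoint[OF fin D] U by simp
  define B where "B = 1 / ((1 - eps) * real N)"
  have w0: "\<And>n. n \<notin> {..<N} \<Longrightarrow> w n = 0" and w1: "(\<Sum>n<N. w n) = 1"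
    and wnn: "\<And>n. n < N \<Longrightarrow> 0 \<le> w n" and wB: "\<And>n. n < N \<Longrightarrow> w n \<le> B"
    using wD by (auto simp: capped_simplex_def B_def)
  have gam0: "0 \<le> gam N g w mu" by (simp add: gam_def opnorm_nonneg)
  have al0: "0 \<le> alpha_eps eps" using alpha_nonneg[OF eps] by simp
  define m where "m = (\<Sum>n<N. w n *\<^sub>R g n)"
  define v where "v = m - mug"
  show ?thesis
  proof (cases "v = 0")
    case True
    have "(\<Sum>n<N. w n *\<^sub>R g n) - mug = 0" using True by (simp add: v_def m_def)
    then show ?thesis using dmu gam0 al0 by simp
  next
    case False
    define x where "x = (1 / norm v) *\<^sub>R v"
    have nx: "norm x = 1" using False by (simp add: x_def)
    have xv: "x \<bullet> v = norm v" using False by (simp add: x_def power2_norm_eq_inner[symmetric] power2_eq_square)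
    define y where "y = (\<lambda>n. x \<bullet> g n)"
    define M where "M = (\<Sum>n<N. w n * y n)"
    have xm: "x \<bullet> m = M" by (simp add: m_def M_def y_def inner_sum_right)
    define V where "V = (\<Sum>n<N. w n * (y n - M)\<^sup>2)"
    have V0: "0 \<le> V" unfolding V_def using wnn by (intro sum_nonneg) auto
    have Vg: "V \<le> gam N g w mu"
    proof -
      define c where "c = x \<bullet> mu"
      have "\<And>n. w n * (y n - c)\<^sup>2 = w n * (y n - M)\<^sup>2 + (M - c) * (2 * (w n * y n) - w n * (M + c))"
        by (simp add: power2_eq_square algebra_simps)
      then have "(\<Sum>n<N. w n * (y n - c)\<^sup>2) = V + (M - c) * (2 * M - (M + c))"
        by (simp add: sum.distrib V_def M_def sum_distrib_left[symmetric] sum_subtractf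
            sum_distrib_right[symmetric] w1)
      also have "\<dots> = V + (M - c)\<^sup>2" by (simp add: power2_eq_square algebra_simps)
      finally have "V \<le> (\<Sum>n<N. w n * (y n - c)\<^sup>2)" by simp
      also have "\<dots> = x \<bullet> (Smat N g w mu *v x)"
        by (simp add: Smat_quad y_def c_def inner_diff_left inner_diff_right inner_commute)
      also have "\<dots> \<le> opnorm (Smat N g w mu) * (norm x)\<^sup>2" by (rule quad_le_opnorm)
      also have "\<dots> = gam N g w mu" by (simp add: gam_def nx)
      finally show ?thesis .
    qed
    define Win where "Win = (\<Sum>n\<in>Iin. w n)"
    define Wout where "Wout = (\<Sum>n\<in>Iout. w n)"
    have Wsum: "Win + Wout = 1" using split[of w] w1 by (simp add: Win_def Wout_def)
    have Wout0: "0 \<le> Wout" unfolding Wout_def using wnn sub by (intro sum_nonneg) auto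
    have epsB: "(1 - eps) * real N > 0" using eps N by simp
    have Woutb: "Wout * (1 - eps) \<le> eps"
    proof -
      have "Wout \<le> real (card Iout) * B"
        unfolding Wout_def using wB sub by (intro sum_bounded_above) auto
      then have "Wout * (1 - eps) \<le> real (card Iout) * B * (1 - eps)"
        using eps by (intro mult_right_mono) auto
      also have "\<dots> = real (card Iout) / real N"
      proof -
        have "B * (1 - eps) = 1 / real N" using eps N by (simp add: B_def)
        then show ?thesis by (simp add: mult.assoc)
      qed
      also have "\<dots> \<le> eps" using cO N by (simp add: divide_le_eq)
      finally show ?thesis .
    qed
    have Winpos: "Win > 0"
    proof -
      have "Wout < 1/2"
      proof -
        have "eps < (1/2) * (1 - eps)" using eps by simp
        then have "Wout * (1 - eps) < (1/2) * (1 - eps)" using Woutb by linarith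
        then show ?thesis by (rule mult_right_less_imp_less) (use eps in simp)
      qed
      then show ?thesis using Wsum by simp
    qed
    have ratio: "Wout \<le> eps / (1 - 2*eps) * Win"
    proof -
      have e: "Win = 1 - Wout" using Wsum by simp
      have "Wout * (1 - 2*eps) \<le> eps * Win" unfolding e using Woutb by (simp add: algebra_simps)
      then show ?thesis using eps by (simp add: field_simps)
    qed
    define a where "a = (\<Sum>n\<in>Iout. w n * (y n - M))"
    have tot: "(\<Sum>n<N. w n * (y n - M)) = 0"
      by (simp add: right_diff_distrib sum_subtractf M_def sum_distrib_right[symmetric] w1)
    have ain: "(\<Sum>n\<in>Iin. w n * (y n - M)) = - a" using tot split[of "\<lambda>n. w n * (y n - M)"]
      by (simp add: a_def)
    define Vin where "Vin = (\<Sum>n\<in>Iin. w n * (y n - M)\<^sup>2)"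
    define Vout where "Vout = (\<Sum>n\<in>Iout. w n * (y n - M)\<^sup>2)"
    have VV: "V = Vin + Vout" using split[of "\<lambda>n. w n * (y n - M)\<^sup>2"] by (simp add: V_def Vin_def Vout_def)
    have c1: "a\<^sup>2 \<le> Wout * Vout" unfolding a_def Wout_def Vout_def
      by (rule wcs) (use wnn sub in auto)
    have c2: "a\<^sup>2 \<le> Win * Vin"
    proof -
      have "(- a)\<^sup>2 \<le> Win * Vin" unfolding ain[symmetric] Win_def Vin_def
        by (rule wcs) (use wnn sub in auto)
      then show ?thesis by simp
    qed
    have a2: "a\<^sup>2 \<le> Win * Wout * V"
    proof -
      have "a\<^sup>2 = (Win + Wout) * a\<^sup>2" using Wsum by simp
      also have "\<dots> = Win * a\<^sup>2 + Wout * a\<^sup>2" by (simp add: algebra_simps)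
      also have "\<dots> \<le> Win * (Wout * Vout) + Wout * (Win * Vin)"
        using c1 c2 Winpos Wout0 by (intro add_mono mult_left_mono) auto
      also have "\<dots> = Win * Wout * V" by (simp add: VV algebra_simps)
      finally show ?thesis .
    qed
    define w' where "w' = (\<lambda>n. if n \<in> Iin then w n / Win else 0)"
    have w'D: "w' \<in> capped_simplex Iin (eps / (1 - eps))"
      unfolding capped_simplex_def
    proof (intro CollectI conjI ballI allI impI)
      fix n assume "n \<notin> Iin" then show "w' n = 0" by (simp add: w'_def)
    next
      show "sum w' Iin = 1" using Winpos by (simp add: w'_def Win_def sum_divide_distrib[symmetric])
    next
      fix n assume "n \<in> Iin" then show "0 \<le> w' n" using wnn sub Winpos by (auto simp: w'_def)
    next
      fix n assume nI: "n \<in> Iin"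
      define r where "r = 1 - eps / (1 - eps)"
      have r0: "r > 0" using eps by (simp add: r_def field_simps)
      have cIpos: "real (card Iin) > 0"
      proof -
        have "real (card Iin) \<ge> (1 - eps) * real N" using cN cO by (simp add: algebra_simps)
        then show ?thesis using epsB by linarith
      qed
      have ca: "r * real (card Iin) + real (card Iout) \<le> (1 - eps) * (real (card Iin) + real (card Iout))"
        unfolding r_def
        by (rule cap_arith) (use eps cO cN cIpos in \<open>auto simp: algebra_simps\<close>)
      have WinB: "Win \<ge> 1 - real (card Iout) * B"
      proof -
        have "Wout \<le> real (card Iout) * B"
          unfolding Wout_def using wB sub by (intro sum_bounded_above) auto
        then show ?thesis using Wsum by simp
      qed
      have "B * (r * real (card Iin) + real (card Iout)) \<le> B * ((1 - eps) * real N)"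
        using ca cN epsB by (intro mult_left_mono) (auto simp: B_def)
      also have "\<dots> = 1" using epsB eps N by (simp add: B_def)
      finally have "B * (r * real (card Iin)) \<le> 1 - real (card Iout) * B" by (simp add: algebra_simps)
      then have "w n * (r * real (card Iin)) \<le> Win"
        using wB[of n] nI sub WinB r0 cIpos
        by (smt (verit, ccfv_SIG) mult_nonneg_nonneg mult_right_mono subsetD lessThan_iff)
      then show "w' n \<le> 1 / (r * real (card Iin))"
        using nI Winpos r0 cIpos by (simp add: w'_def field_simps)
    qed
    have inb: "norm (\<Sum>n\<in>Iin. w' n *\<^sub>R (g n - mug)) \<le> dmu" by (rule inl[OF w'D])
    define Min where "Min = (\<Sum>n\<in>Iin. w n * y n) / Win"
    have xin: "x \<bullet> (\<Sum>n\<in>Iin. w' n *\<^sub>R (g n - mug)) = Min - x \<bullet> mug"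
    proof -
      have "x \<bullet> (\<Sum>n\<in>Iin. w' n *\<^sub>R (g n - mug)) = (\<Sum>n\<in>Iin. w n * y n / Win - w n / Win * (x \<bullet> mug))"
        by (simp add: inner_sum_right w'_def y_def inner_diff_right right_diff_distrib)
      also have "\<dots> = Min - x \<bullet> mug"
        using Winpos by (simp add: sum_subtractf Min_def sum_divide_distrib[symmetric]
            sum_distrib_right[symmetric] Win_def[symmetric])
      finally show ?thesis .
    qed
    have b1: "\<bar>Min - x \<bullet> mug\<bar> \<le> dmu"
      using Cauchy_Schwarz_ineq2[of x "\<Sum>n\<in>Iin. w' n *\<^sub>R (g n - mug)"] nx inb xin by simp
    have MMin: "M - Min = a / Win"
    proof -
      have "(\<Sum>n\<in>Iin. w n * (y n - M)) = Win * Min - Win * M"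
        using Winpos by (simp add: right_diff_distrib sum_subtractf Min_def Win_def sum_distrib_right[symmetric])
      then have "Win * (M - Min) = a" using ain by (simp add: algebra_simps)
      then show ?thesis using Winpos by (simp add: field_simps)
    qed
    have b2: "\<bar>a\<bar> / Win \<le> alpha_eps eps * sqrt (gam N g w mu)"
    proof -
      have "(\<bar>a\<bar> / Win)\<^sup>2 = a\<^sup>2 / Win\<^sup>2" by (simp add: power_divide)
      also have "\<dots> \<le> Win * Wout * V / Win\<^sup>2" using a2 Winpos by (intro divide_right_mono) auto
      also have "\<dots> = Wout * V / Win" using Winpos by (simp add: power2_eq_square field_simps)
      also have "\<dots> \<le> (eps / (1 - 2*eps) * Win) * V / Win"
        using ratio V0 Winpos by (intro divide_right_mono mult_right_mono) auto
      also have "\<dots> = eps / (1 - 2*eps) * V" using Winpos by simp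
      also have "\<dots> \<le> eps / (1 - 2*eps) * gam N g w mu"
        using Vg eps by (intro mult_left_mono) auto
      finally have "\<bar>a\<bar> / Win \<le> sqrt (eps / (1 - 2*eps) * gam N g w mu)"
        by (rule real_le_rsqrt)
      also have "\<dots> = alpha_eps eps * sqrt (gam N g w mu)"
        unfolding alpha_eps_def by (rule real_sqrt_mult)
      finally show ?thesis .
    qed
    have "norm v = x \<bullet> v" by (simp add: xv)
    also have "\<dots> = (M - Min) + (Min - x \<bullet> mug)" by (simp add: v_def inner_diff_right xm)
    also have "\<dots> \<le> \<bar>a\<bar> / Win + dmu" using MMin b1 Winpos
      by (smt (verit) abs_ge_self divide_right_mono abs_le_D1)
    finally show ?thesis using b2 by (simp add: v_def m_def)
  qed
qed



lemma pow_bound: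
  fixes al r :: real and K :: nat
  assumes al: "0 < al" "al < 1" and r: "0 < r" and K: "ln r / ln (1 / al) \<le> real K"
  shows "al ^ K \<le> 1 / r"
proof -
  have l: "ln (1 / al) > 0" using al by (simp add: ln_div)
  have "ln r \<le> real K * ln (1 / al)" using K l by (simp add: divide_le_eq)
  then have "ln (al ^ K) \<le> ln (1 / r)"
    using al r by (simp add: ln_realpow ln_div)
  then show ?thesis using al r by simp
qed

theorem mainTheorem12:
  fixes g :: "nat \<Rightarrow> real^'p"
    and N T :: nat
    and eps nu dmu dSig Rk Cstop :: real
    and Iin Iout :: "nat set"
    and mug :: "real^'p"
    and Sig :: "real^'p^'p"
    and muhat :: "nat \<Rightarrow> real^'p"
    and wbar :: "nat \<Rightarrow> nat \<Rightarrow> real"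
  defines "p \<equiv> CARD('p)"
    and "dT \<equiv> deltaT nu eps CARD('p) T"
    and "Rinf \<equiv> R_inf eps dmu (opnorm Sig) dSig (deltaT nu eps CARD('p) T)"
    and "stopped \<equiv> (\<lambda>s. gam N g (wbar s) (muhat s) \<le> Cstop)"
  assumes N: "N \<ge> 1"
    and p: "p \<ge> 2"
    and eps: "0 < eps" "eps < 1/3"
    and nu: "nu = (MAX i\<in>{..<N}. MAX j\<in>{..<N}. (norm (g i - g j))\<^sup>2)" "nu > 0"
    and T: "real T \<ge> 4 * max (ln (1 / (1 - eps))) (ln (real p))"
    and stab: "inlier_stable N eps g Iin Iout mug Sig dmu dSig"
    and Rk: "Rk > Rinf"
    and Cstop: "Cstop \<ge> opnorm Sig + dSig + (dmu + Rk)\<^sup>2 + dT"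
    and init: "muhat 1 \<in> convex hull (g ` {..<N})"
    and wsel: "\<And>s. s \<ge> 1 \<Longrightarrow> (\<forall>t. 1 \<le> t \<and> t < s \<longrightarrow> \<not> stopped t) \<Longrightarrow>
                 wbar s \<in> capped_simplex {..<N} eps \<and>
                 gam N g (wbar s) (muhat s) \<le> OPT N eps g (muhat s) + dT"
    and upd: "\<And>s. s \<ge> 1 \<Longrightarrow> (\<forall>t. 1 \<le> t \<and> t \<le> s \<longrightarrow> \<not> stopped t) \<Longrightarrow>
                 muhat (Suc s) = (\<Sum>n<N. wbar s n *\<^sub>R g n)"
  shows "(\<forall>s\<ge>1. (\<forall>t. 1 \<le> t \<and> t < s \<longrightarrow> \<not> stopped t) \<longrightarrow>
            norm (muhat s - mug) \<le> Rk \<longrightarrow> stopped s)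
       \<and> (\<exists>s\<ge>1. int s \<le> s_max (norm (muhat 1 - mug)) Rinf Rk (alpha_eps eps) \<and> stopped s)
       \<and> (\<forall>s\<ge>1. (\<forall>t. 1 \<le> t \<and> t < s \<longrightarrow> \<not> stopped t) \<longrightarrow> stopped s \<longrightarrow>
            norm ((\<Sum>n<N. wbar s n *\<^sub>R g n) - mug) \<le> dmu + alpha_eps eps * sqrt Cstop)"
proof -
  define al where "al = alpha_eps eps"
  define e where "e = (\<lambda>s. norm (muhat s - mug))"
  define nS where "nS = opnorm Sig"
  have al0: "0 < al" using alpha_nonneg[OF eps] by (simp add: al_def)
  have al1: "al < 1"
  proof -
    have "eps / (1 - 2 * eps) < 1" using eps by (simp add: divide_less_eq)
    then show ?thesis by (simp add: al_def alpha_eps_def)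
  qed
  have dmu: "dmu \<ge> 0" and dSig: "dSig \<ge> 0" using stab by (auto simp: inlier_stable_def)
  have nS0: "nS \<ge> 0" by (simp add: nS_def opnorm_nonneg)
  have pp: "real p \<ge> 2" using p by simp
  have dT0: "dT \<ge> 0"
  proof -
    have "ln (1 / (1 - eps)) \<ge> 0" using eps by simp
    moreover have "ln (real p) \<ge> 0" using pp by simp
    ultimately show ?thesis unfolding dT_def deltaT_def p_def[symmetric] using nu(2)
      by (intro mult_nonneg_nonneg add_nonneg_nonneg) auto
  qed
  have N1: "N \<ge> 1" by (rule N)
  have key: "\<And>s. s \<ge> 1 \<Longrightarrow> (\<forall>t. 1 \<le> t \<and> t < s \<longrightarrow> \<not> stopped t) \<Longrightarrow>
      gam N g (wbar s) (muhat s) \<le> nS + dSig + (dmu + e s)\<^sup>2 + dT"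
  proof -
    fix s :: nat assume s1: "s \<ge> 1" and pr: "\<forall>t. 1 \<le> t \<and> t < s \<longrightarrow> \<not> stopped t"
    have "gam N g (wbar s) (muhat s) \<le> OPT N eps g (muhat s) + dT" using wsel[OF s1 pr] by simp
    also have "OPT N eps g (muhat s) \<le> nS + dSig + (dmu + e s)\<^sup>2"
      using OPT_bound[OF stab eps N1, of "muhat s"] by (simp add: nS_def e_def)
    finally show "gam N g (wbar s) (muhat s) \<le> nS + dSig + (dmu + e s)\<^sup>2 + dT" by simp
  qed
  have P1: "\<forall>s\<ge>1. (\<forall>t. 1 \<le> t \<and> t < s \<longrightarrow> \<not> stopped t) \<longrightarrow>
            norm (muhat s - mug) \<le> Rk \<longrightarrow> stopped s"
  proof (intro allI impI)
    fix s :: nat assume s1: "s \<ge> 1" and pr: "\<forall>t. 1 \<le> t \<and> t < s \<longrightarrow> \<not> stopped t"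
      and eR: "norm (muhat s - mug) \<le> Rk"
    have "(dmu + e s)\<^sup>2 \<le> (dmu + Rk)\<^sup>2"
      using eR dmu by (intro power_mono) (auto simp: e_def)
    then have "gam N g (wbar s) (muhat s) \<le> Cstop" using key[OF s1 pr] Cstop by (simp add: nS_def)
    then show "stopped s" by (simp add: stopped_def)
  qed
  have P3: "\<forall>s\<ge>1. (\<forall>t. 1 \<le> t \<and> t < s \<longrightarrow> \<not> stopped t) \<longrightarrow> stopped s \<longrightarrow>
            norm ((\<Sum>n<N. wbar s n *\<^sub>R g n) - mug) \<le> dmu + alpha_eps eps * sqrt Cstop"
  proof (intro allI impI)
    fix s :: nat assume s1: "s \<ge> 1" and pr: "\<forall>t. 1 \<le> t \<and> t < s \<longrightarrow> \<not> stopped t"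
      and st: "stopped s"
    have wD: "wbar s \<in> capped_simplex {..<N} eps" using wsel[OF s1 pr] by simp
    have "norm ((\<Sum>n<N. wbar s n *\<^sub>R g n) - mug) \<le> dmu + al * sqrt (gam N g (wbar s) (muhat s))"
      using mean_bound[OF stab eps N1 wD] by (simp add: al_def)
    also have "\<dots> \<le> dmu + al * sqrt Cstop"
      using st al0 by (auto simp: stopped_def intro!: mult_left_mono)
    finally show "norm ((\<Sum>n<N. wbar s n *\<^sub>R g n) - mug) \<le> dmu + alpha_eps eps * sqrt Cstop"
      by (simp add: al_def)
  qed
  have RE: "R_epsT eps dmu nS dSig dT = (1 - al) * Rinf"
    using al1 by (simp add: Rinf_def R_inf_def dT_def nS_def al_def)
  have rec: "\<And>s. s \<ge> 1 \<Longrightarrow> (\<forall>t. 1 \<le> t \<and> t \<le> s \<longrightarrow> \<not> stopped t) \<Longrightarrow>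
      e (Suc s) - Rinf \<le> al * (e s - Rinf)"
  proof -
    fix s :: nat assume s1: "s \<ge> 1" and pr: "\<forall>t. 1 \<le> t \<and> t \<le> s \<longrightarrow> \<not> stopped t"
    have pr': "\<forall>t. 1 \<le> t \<and> t < s \<longrightarrow> \<not> stopped t" using pr by auto
    have wD: "wbar s \<in> capped_simplex {..<N} eps" using wsel[OF s1 pr'] by simp
    have "e (Suc s) = norm ((\<Sum>n<N. wbar s n *\<^sub>R g n) - mug)" using upd[OF s1 pr] by (simp add: e_def)
    also have "\<dots> \<le> dmu + al * sqrt (gam N g (wbar s) (muhat s))"
      using mean_bound[OF stab eps N1 wD] by (simp add: al_def)
    also have "\<dots> \<le> dmu + al * sqrt ((nS + dSig + dT) + (dmu + e s)\<^sup>2)"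
      using key[OF s1 pr'] al0 by (auto simp: add_ac intro!: mult_left_mono)
    also have "\<dots> \<le> dmu + al * (sqrt (nS + dSig + dT) + (dmu + e s))"
    proof -
      have "sqrt ((nS + dSig + dT) + (dmu + e s)\<^sup>2) \<le> sqrt (nS + dSig + dT) + sqrt ((dmu + e s)\<^sup>2)"
        by (rule sqrt_add_le_add_sqrt) (use nS0 dSig dT0 in auto)
      also have "sqrt ((dmu + e s)\<^sup>2) = dmu + e s" using dmu by (simp add: e_def)
      finally show ?thesis using al0 by (intro add_left_mono mult_left_mono) auto
    qed
    also have "\<dots> = R_epsT eps dmu nS dSig dT + al * e s"
      by (simp add: R_epsT_def al_def algebra_simps)
    finally have "e (Suc s) \<le> (1 - al) * Rinf + al * e s" using RE by simp
    then show "e (Suc s) - Rinf \<le> al * (e s - Rinf)" by (simp add: algebra_simps)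
  qed
  have P2: "\<exists>s\<ge>1. int s \<le> s_max (norm (muhat 1 - mug)) Rinf Rk (alpha_eps eps) \<and> stopped s"
  proof (cases "e 1 \<le> Rinf")
    case True
    then have "stopped 1" using P1 Rk by (auto simp: e_def)
    moreover have "s_max (norm (muhat 1 - mug)) Rinf Rk (alpha_eps eps) = 1"
      using True by (simp add: s_max_def e_def)
    ultimately show ?thesis by (intro exI[of _ 1]) auto
  next
    case False
    define r where "r = (e 1 - Rinf) / (Rk - Rinf)"
    have r0: "r > 0" using False Rk by (simp add: r_def)
    define c where "c = \<lceil>ln r / ln (1 / al)\<rceil>"
    define K where "K = nat (max 0 c)"
    have smax: "s_max (norm (muhat 1 - mug)) Rinf Rk (alpha_eps eps) = int (1 + K)"
      using False by (simp add: s_max_def e_def r_def c_def K_def al_def)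
    have Kb: "ln r / ln (1 / al) \<le> real K"
    proof -
      have "ln r / ln (1 / al) \<le> real_of_int c" by (simp add: c_def)
      also have "\<dots> \<le> real K" by (simp add: K_def)
      finally show ?thesis .
    qed
    have alK: "al ^ K \<le> 1 / r" by (rule pow_bound[OF al0 al1 r0 Kb])
    show ?thesis
    proof (cases "\<exists>t. 1 \<le> t \<and> t \<le> K \<and> stopped t")
      case True
      then obtain t where "1 \<le> t" "t \<le> K" "stopped t" by blast
      then show ?thesis using smax by (intro exI[of _ t]) auto
    next
      case False
      have it: "j \<le> K \<Longrightarrow> e (1 + j) - Rinf \<le> al ^ j * (e 1 - Rinf)" for j
      proof (induction j)
        case 0 then show ?case by simp
      next
        case (Suc j)
        have "e (Suc (1 + j)) - Rinf \<le> al * (e (1 + j) - Rinf)"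
          by (rule rec) (use False Suc.prems in auto)
        also have "\<dots> \<le> al * (al ^ j * (e 1 - Rinf))"
          using Suc al0 by (intro mult_left_mono) auto
        finally show ?case by simp
      qed
      have "e (1 + K) - Rinf \<le> al ^ K * (e 1 - Rinf)" by (rule it) simp
      also have "\<dots> \<le> (1 / r) * (e 1 - Rinf)"
        using alK \<open>\<not> e 1 \<le> Rinf\<close> by (intro mult_right_mono) auto
      also have "\<dots> = Rk - Rinf" using r0 Rk \<open>\<not> e 1 \<le> Rinf\<close> by (simp add: r_def)
      finally have "norm (muhat (1 + K) - mug) \<le> Rk" by (simp add: e_def)
      then have "stopped (1 + K)" using P1 False by auto
      then show ?thesis using smax by (intro exI[of _ "1 + K"]) auto
    qed
  qed
  show ?thesis using P1 P2 P3 by blast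
qed


end
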